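(* Let $G$ and $H$ be graphs such that the direct product $G\times H$ is a balanced distance magic graph, and let $\ell$ be a balanced distance magic labeling of $G\times H$ in which $(g,h)$ and $(g',h)$ are twins and also $(g,h_1)$ and $(g,h_2)$ are twins. Let $\widehat\ell$ be obtained from $\ell$ by exchanging the labels of $(g,h_2)$ and $(g',h_1)$, i.e. $\widehat\ell(g,h_2)=\ell(g',h_1)$, $\widehat\ell(g',h_1)=\ell(g,h_2)$, and $\widehat\ell(a,b)=\ell(a,b)$ for all other vertices. Then $\widehat\ell$ is a balanced distance magic labeling of $G\times H$ in which $(g,h_1)$ and $(g',h_1)$ are twins.
   Context: All graphs are finite and simple. For a graph $G$ and vertex $x$, $N(x)=N_G(x)$ is the (open) neighborhood of $x$. A distance magic labeling of a graph $G$ of order $N$ is a bijection $\ell\colon V(G)\to\{1,\dots,N\}$ for which there is a constant $k$ such that the weight $w(x)=\sum_{y\in N(x)}\ell(y)$ equals $k$ for every $x\in V(G)$. A balanced distance magic labeling of a graph $G$ with an even number $N$ of vertices is a distance magic labeling $\ell$ such that for every $w\in V(G)$: whenever $u\in N(w)$ has $\ell(u)=i$, there is $v\in N(w)$ with $\ell(v)=N+1-i$. Under such $\ell$, the vertices labeled $i$ and $N+1-i$ are called twins (with respect to $\ell$). $G$ is a balanced distance magic graph if it has an even number of vertices and admits a balanced distance magic labeling. The direct product $G\times H$ has vertex set $V(G)\times V(H)$, with $(g,h)$ adjacent to $(g',h')$ iff $gg'\in E(G)$ and $hh'\in E(H)$. *)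

theory Defs
  imports Main
begin

definition simple_graph :: "'a set \<Rightarrow> ('a \<Rightarrow> 'a \<Rightarrow> bool) \<Rightarrow> bool" where
  "simple_graph V E \<longleftrightarrow> finite V \<and> (\<forall>x y. E x y \<longrightarrow> x \<in> V \<and> y \<in> V)
     \<and> (\<forall>x y. E x y \<longrightarrow> E y x) \<and> (\<forall>x. \<not> E x x)"

definition nbhd :: "'a set \<Rightarrow> ('a \<Rightarrow> 'a \<Rightarrow> bool) \<Rightarrow> 'a \<Rightarrow> 'a set" where
  "nbhd V E x = {y \<in> V. E x y}"

definition dprod_V :: "'a set \<Rightarrow> 'b set \<Rightarrow> ('a \<times> 'b) set" where
  "dprod_V VG VH = VG \<times> VH"

definition dprod_E :: "('a \<Rightarrow> 'a \<Rightarrow> bool) \<Rightarrow> ('b \<Rightarrow> 'b \<Rightarrow> bool) \<Rightarrow> ('a \<times> 'b) \<Rightarrow> ('a \<times> 'b) \<Rightarrow> bool" where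
  "dprod_E EG EH p q \<longleftrightarrow> EG (fst p) (fst q) \<and> EH (snd p) (snd q)"

definition distance_magic :: "'a set \<Rightarrow> ('a \<Rightarrow> 'a \<Rightarrow> bool) \<Rightarrow> ('a \<Rightarrow> nat) \<Rightarrow> bool" where
  "distance_magic V E l \<longleftrightarrow> bij_betw l V {1..card V}
     \<and> (\<exists>k. \<forall>x\<in>V. (\<Sum>y\<in>nbhd V E x. l y) = k)"

definition balanced_distance_magic :: "'a set \<Rightarrow> ('a \<Rightarrow> 'a \<Rightarrow> bool) \<Rightarrow> ('a \<Rightarrow> nat) \<Rightarrow> bool" where
  "balanced_distance_magic V E l \<longleftrightarrow> even (card V) \<and> distance_magic V E l
     \<and> (\<forall>w\<in>V. \<forall>u\<in>nbhd V E w. \<exists>v\<in>nbhd V E w. l v = card V + 1 - l u)"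

definition twins :: "'a set \<Rightarrow> ('a \<Rightarrow> nat) \<Rightarrow> 'a \<Rightarrow> 'a \<Rightarrow> bool" where
  "twins V l x y \<longleftrightarrow> x \<in> V \<and> y \<in> V \<and> l x + l y = card V + 1"

end

theory Submission
  imports Defs
begin

definition swp :: "'a \<Rightarrow> 'a \<Rightarrow> 'a \<Rightarrow> 'a" where
  "swp p q x = (if x = p then q else if x = q then p else x)"

lemma swp_inv[simp]: "swp p q (swp p q x) = x"
  by (simp add: swp_def)

lemma upd_swp: "l(p := l q, q := l p) = l \<circ> swp p q"
  by (rule ext) (simp add: swp_def)

lemma swp_inj: "inj_on (swp p q) A"
  by (metis swp_inv inj_on_inverseI)

lemma swp_mem: assumes "p \<in> A \<longleftrightarrow> q \<in> A" "x \<in> A" shows "swp p q x \<in> A"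
proof (cases "x = p")
  case True then show ?thesis using assms by (simp add: swp_def)
next
  case False then show ?thesis using assms by (cases "x = q") (simp_all add: swp_def)
qed

lemma swp_img: assumes "p \<in> A \<longleftrightarrow> q \<in> A" shows "swp p q ` A = A"
proof
  show "swp p q ` A \<subseteq> A" using swp_mem[OF assms] by blast
  show "A \<subseteq> swp p q ` A"
  proof
    fix x assume x: "x \<in> A"
    have "x = swp p q (swp p q x)" by simp
    moreover have "swp p q x \<in> A" using swp_mem[OF assms x] .
    ultimately show "x \<in> swp p q ` A" by (rule image_eqI)
  qed
qed

lemma sum_swap_nbhd:
  assumes "p \<in> A \<longleftrightarrow> q \<in> A"
  shows "(\<Sum>y\<in>A. (l(p := l q, q := l p)) y) = (\<Sum>y\<in>A. l y)"
proof -
  have "sum (l \<circ> swp p q) A = sum l (swp p q ` A)"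
    by (rule sum.reindex[OF swp_inj, symmetric])
  then show ?thesis by (simp only: upd_swp swp_img[OF assms])
qed

theorem lemma2:
  fixes VG :: "'a set" and EG :: "'a \<Rightarrow> 'a \<Rightarrow> bool"
    and VH :: "'b set" and EH :: "'b \<Rightarrow> 'b \<Rightarrow> bool"
    and l :: "'a \<times> 'b \<Rightarrow> nat" and g g' :: 'a and h h1 h2 :: 'b
  assumes "simple_graph VG EG" and "simple_graph VH EH"
    and "balanced_distance_magic (dprod_V VG VH) (dprod_E EG EH) l"
    and "twins (dprod_V VG VH) l (g, h) (g', h)"
    and "twins (dprod_V VG VH) l (g, h1) (g, h2)"
  shows "balanced_distance_magic (dprod_V VG VH) (dprod_E EG EH)
           (l((g, h2) := l (g', h1), (g', h1) := l (g, h2)))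
       \<and> twins (dprod_V VG VH) (l((g, h2) := l (g', h1), (g', h1) := l (g, h2))) (g, h1) (g', h1)"
proof -
  define V where "V = dprod_V VG VH"
  define E where "E = dprod_E EG EH"
  define N where "N = card V"
  define p where "p = (g, h2)"
  define q where "q = (g', h1)"
  have V: "V = VG \<times> VH" by (simp add: V_def dprod_V_def)
  have G: "finite VG" "\<And>x y. EG x y \<Longrightarrow> x \<in> VG \<and> y \<in> VG" "\<And>x y. EG x y \<Longrightarrow> EG y x"
    "\<And>x. \<not> EG x x" using assms(1) unfolding simple_graph_def by blast+
  have H: "finite VH" "\<And>x y. EH x y \<Longrightarrow> x \<in> VH \<and> y \<in> VH" "\<And>x y. EH x y \<Longrightarrow> EH y x"
    using assms(2) unfolding simple_graph_def by blast+
  have finV: "finite V" using G H V by simp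
  have bal: "even N" "bij_betw l V {1..N}"
    and k: "\<exists>k. \<forall>x\<in>V. (\<Sum>y\<in>nbhd V E x. l y) = k"
    and B: "\<And>w u. w \<in> V \<Longrightarrow> u \<in> nbhd V E w \<Longrightarrow> \<exists>v\<in>nbhd V E w. l v = N + 1 - l u"
    using assms(3) unfolding balanced_distance_magic_def distance_magic_def V_def E_def N_def
    by blast+
  obtain k where k: "\<And>x. x \<in> V \<Longrightarrow> (\<Sum>y\<in>nbhd V E x. l y) = k" using k by blast
  have inj: "inj_on l V" and rng: "\<And>x. x \<in> V \<Longrightarrow> l x \<in> {1..N}"
    using bal(2) by (auto simp: bij_betw_def)
  have t1: "(g,h) \<in> V" "(g',h) \<in> V" "l (g,h) + l (g',h) = N + 1"
    using assms(4) by (auto simp: twins_def V_def N_def)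
  have t2: "(g,h1) \<in> V" "(g,h2) \<in> V" "l (g,h1) + l (g,h2) = N + 1"
    using assms(5) by (auto simp: twins_def V_def N_def)
  have gg: "g \<noteq> g'"
  proof
    assume "g = g'"
    then have "l (g,h) + l (g,h) = N + 1" using t1(3) by simp
    then show False using bal(1) by presburger
  qed
  have hh: "h1 \<noteq> h2"
  proof
    assume "h1 = h2"
    then have "l (g,h1) + l (g,h1) = N + 1" using t2(3) by simp
    then show False using bal(1) by presburger
  qed
  have qV: "q \<in> V" using t1 t2 V q_def by auto
  have nb: "\<And>a b x. (x \<in> nbhd V E (a,b)) = (x \<in> V \<and> EG a (fst x) \<and> EH b (snd x))"
    by (simp add: nbhd_def E_def dprod_E_def)
  have TT: "y \<in> nbhd V E w" if TTa: "w \<in> V" "u \<in> nbhd V E w" "y \<in> V" "l u + l y = N + 1" for w u y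
  proof -
    obtain v where v: "v \<in> nbhd V E w" "l v = N + 1 - l u" using B[OF TTa(1,2)] by blast
    have "v \<in> V" using v(1) by (simp add: nbhd_def)
    moreover have "l v = l y" using v(2) TTa(4) by simp
    ultimately have "v = y" using inj TTa(3) by (simp add: inj_on_def)
    then show ?thesis using v(1) by simp
  qed
  have nonempty: "\<exists>d. EH h d" if NEa: "w \<in> V" "x \<in> nbhd V E w" for w x
  proof (rule ccontr)
    assume "\<not> ?thesis"
    then have "nbhd V E (g,h) = {}" using nb by auto
    then have "k = 0" using k[OF t1(1)] by simp
    moreover have "l x \<ge> 1" using rng[of x] NEa(2) by (auto simp: nbhd_def)
    moreover have "l x \<le> (\<Sum>y\<in>nbhd V E w. l y)"
      using NEa(2) finV by (intro member_le_sum) (auto simp: nbhd_def)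
    ultimately show False using k[OF NEa(1)] by simp
  qed
  have key: "p \<in> nbhd V E w \<longleftrightarrow> q \<in> nbhd V E w" if wV: "w \<in> V" for w
  proof -
    obtain a b where w: "w = (a,b)" by force
    have aV: "a \<in> VG" and bV: "b \<in> VH" using wV w V by auto
    have g_g': "EG a g'" if GGa: "EG a g" "\<exists>d. EH h d" for a
    proof -
      obtain d where d: "EH h d" using GGa(2) by blast
      have "a \<in> VG" using G(2) GGa(1) by blast
      moreover have dV: "d \<in> VH" using H(2) d by blast
      ultimately have adV: "(a,d) \<in> V" using V by simp
      have "(g,h) \<in> nbhd V E (a,d)" using nb t1 GGa(1) H(3)[OF d] by simp
      then have "(g',h) \<in> nbhd V E (a,d)" using TT[OF adV _ t1(2) t1(3)] by simp
      then show ?thesis using nb by simp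
    qed
    have g'_g: "EG a g" if GGb: "EG a g'" "\<exists>d. EH h d" for a
    proof -
      obtain d where d: "EH h d" using GGb(2) by blast
      have "a \<in> VG" using G(2) GGb(1) by blast
      moreover have dV: "d \<in> VH" using H(2) d by blast
      ultimately have adV: "(a,d) \<in> V" using V by simp
      have "(g',h) \<in> nbhd V E (a,d)" using nb t1 GGb(1) H(3)[OF d] by simp
      then have "(g,h) \<in> nbhd V E (a,d)" using TT[OF adV _ t1(1)] t1(3) by (simp add: add.commute)
      then show ?thesis using nb by simp
    qed
    show ?thesis
    proof
      assume pn: "p \<in> nbhd V E w"
      have ne: "\<exists>d. EH h d" using nonempty[OF wV pn] .
      have "(g,h1) \<in> nbhd V E w" using TT[OF wV pn[unfolded p_def] t2(1)] t2(3) by (simp add: add.commute)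
      then have "EH b h1" using nb w by simp
      moreover have "EG a g" using pn nb w p_def by simp
      ultimately show "q \<in> nbhd V E w" using g_g'[OF _ ne] nb w q_def qV by simp
    next
      assume qn: "q \<in> nbhd V E w"
      have ne: "\<exists>d. EH h d" using nonempty[OF wV qn] .
      have "EG a g'" "EH b h1" using qn nb w q_def by simp_all
      then have "EG a g" using g'_g ne by blast
      then have "(g,h1) \<in> nbhd V E w" using nb w t2 \<open>EH b h1\<close> by simp
      then have "(g,h2) \<in> nbhd V E w" using TT[OF wV _ t2(2) t2(3)] by simp
      then show "p \<in> nbhd V E w" using p_def by simp
    qed
  qed
  define s where "s = swp p q"
  define l' where "l' = l(p := l q, q := l p)"
  have l's: "l' = l \<circ> s" by (simp add: l'_def s_def upd_swp)
  have pV: "p \<in> V" using t2 p_def by simp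
  have pqV: "p \<in> V \<longleftrightarrow> q \<in> V" using pV qV by blast
  have inv: "\<And>x. s (s x) = x" by (simp add: s_def)
  have bij': "bij_betw l' V {1..N}"
  proof -
    have "bij_betw s V V" unfolding s_def by (rule bij_betw_imageI[OF swp_inj swp_img[OF pqV]])
    then show ?thesis unfolding l's by (rule bij_betw_trans[OF _ bal(2)])
  qed
  have sums: "(\<Sum>y\<in>nbhd V E x. l' y) = k" if xV: "x \<in> V" for x
  proof -
    have "(\<Sum>y\<in>nbhd V E x. l' y) = (\<Sum>y\<in>nbhd V E x. l y)"
      unfolding l'_def by (rule sum_swap_nbhd[OF key[OF xV]])
    then show ?thesis using k[OF xV] by simp
  qed
  have ss: "s u \<in> nbhd V E w" if SSa: "w \<in> V" "u \<in> nbhd V E w" for w u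
    unfolding s_def by (rule swp_mem[OF key[OF SSa(1)] SSa(2)])
  have bal': "\<exists>v\<in>nbhd V E w. l' v = N + 1 - l' u" if BLa: "w \<in> V" "u \<in> nbhd V E w" for w u
  proof -
    obtain v where v: "v \<in> nbhd V E w" "l v = N + 1 - l (s u)" using B[OF BLa(1) ss[OF BLa]] by blast
    have sv: "s v \<in> nbhd V E w" using ss[OF BLa(1) v(1)] .
    have "l' (s v) = l (s (s v))" unfolding l's by simp
    also have "\<dots> = l v" by (simp only: inv)
    also have "\<dots> = N + 1 - l' u" unfolding l's using v(2) by simp
    finally show ?thesis using sv by blast
  qed
  have tw: "l' (g,h1) + l' (g',h1) = N + 1"
    using gg hh t2(3) by (simp add: l'_def p_def q_def)
  have "balanced_distance_magic V E l'"
    unfolding balanced_distance_magic_def distance_magic_def N_def[symmetric]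
  proof (intro conjI)
    show "even N" by (rule bal(1))
    show "bij_betw l' V {1..N}" by (rule bij')
    show "\<exists>k. \<forall>x\<in>V. (\<Sum>y\<in>nbhd V E x. l' y) = k" using sums by blast
    show "\<forall>w\<in>V. \<forall>u\<in>nbhd V E w. \<exists>v\<in>nbhd V E w. l' v = N + 1 - l' u" using bal' by blast
  qed
  moreover have "twins V l' (g, h1) (g', h1)"
    unfolding twins_def N_def[symmetric] using tw t2(1) qV unfolding q_def by blast
  ultimately show ?thesis unfolding V_def E_def l'_def p_def q_def by (rule conjI)
qed

end
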